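(* Let $p(z)=c_0z^{\deg(p)}+\cdots$ be a non-constant polynomial with leading coefficient $c_0\neq0$, and let $0<\gamma<1$. Then for all $r>0$, $$\int_0^{2\pi}\frac{d\theta}{|p(re^{i\theta})|^{\gamma/\deg(p)}}\le \frac{2\pi}{(1-\gamma)|c_0|^{\gamma/\deg(p)}}\cdot\frac{1}{r^{\gamma}}.$$ *)

theory Defs
  imports "HOL-Analysis.Analysis" "HOL-Computational_Algebra.Polynomial"
begin

end

theory Submission
  imports Defs "HOL-Computational_Algebra.Fundamental_Theorem_Algebra"
begin


lemma jordan:
  fixes t :: real assumes "0 \<le> t" "t \<le> pi/2"
  shows "2 / pi * t \<le> sin t"
proof -
  have cv: "convex_on {0..pi/2} (\<lambda>x. - sin x)"
    by (rule f''_ge0_imp_convex[where f'="\<lambda>x. - cos x" and f''="\<lambda>x. sin x"])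
       (auto intro!: derivative_eq_intros sin_ge_zero)
  define l where "l = t / (pi/2)"
  have l: "0 \<le> l" "l \<le> 1" using assms pi_gt_zero by (auto simp: l_def field_simps)
  have "- sin ((1 - l) *\<^sub>R 0 + l *\<^sub>R (pi/2)) \<le> (1 - l) * (- sin 0) + l * (- sin (pi/2))"
    by (rule convex_onD[OF cv]) (use l in auto)
  moreover have "(1 - l) *\<^sub>R 0 + l *\<^sub>R (pi/2) = t" by (simp add: l_def)
  ultimately show ?thesis by (simp add: l_def field_simps)
qed




lemma half_int:
  fixes g :: real assumes g: "0 < g" "g < 1"
  shows "(\<integral>\<^sup>+t. ennreal (\<bar>sin t\<bar> powr (-g)) * indicator {0..pi/2} t \<partial>lborel) \<le> ennreal (pi/2/(1-g))"
proof -
  have I: "(\<integral>\<^sup>+t. ennreal (t powr (-g)) * indicator {0..pi/2} t \<partial>lborel) = ennreal ((pi/2) powr (-g+1)/(-g+1))"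
    using has_integral_powr_from_0[of "-g" "pi/2"] g
    by (intro nn_integral_has_integral_lebesgue') auto
  have "(\<integral>\<^sup>+t. ennreal (\<bar>sin t\<bar> powr (-g)) * indicator {0..pi/2} t \<partial>lborel)
      \<le> (\<integral>\<^sup>+t. ennreal ((2/pi) powr (-g)) * (ennreal (t powr (-g)) * indicator {0..pi/2} t) \<partial>lborel)"
  proof (rule nn_integral_mono)
    fix t :: real
    show "ennreal (\<bar>sin t\<bar> powr (-g)) * indicator {0..pi/2} t
       \<le> ennreal ((2/pi) powr (-g)) * (ennreal (t powr (-g)) * indicator {0..pi/2} t)"
    proof (cases "t \<in> {0<..pi/2}")
      case True
      then have "2/pi*t \<le> sin t" "0 < 2/pi*t" using jordan by auto
      then have "\<bar>sin t\<bar> powr (-g) \<le> (2/pi*t) powr (-g)"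
        by (intro powr_mono2') (use g in auto)
      also have "\<dots> = (2/pi) powr (-g) * t powr (-g)" using True by (subst powr_mult) auto
      finally show ?thesis using True by (simp add: ennreal_mult[symmetric] indicator_def)
    next
      case False
      then show ?thesis by (cases "t = 0") (auto simp: indicator_def)
    qed
  qed
  also have "\<dots> = ennreal ((2/pi) powr (-g)) * ennreal ((pi/2) powr (-g+1)/(-g+1))"
    by (subst nn_integral_cmult) (auto simp: I)
  also have "\<dots> = ennreal (pi/2/(1-g))"
  proof -
    have "(2/pi) powr (-g) * ((pi/2) powr (-g+1)/(-g+1)) = (pi/2) powr g * (pi/2) powr (-g+1) / (1-g)"
      by (simp add: powr_minus_divide powr_divide)
    also have "\<dots> = (pi/2) / (1-g)" by (simp add: powr_add[symmetric])
    finally show ?thesis using g by (subst ennreal_mult[symmetric]) auto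
  qed
  finally show ?thesis .
qed




lemma shift_pi:
  fixes h :: "real \<Rightarrow> ennreal" and A :: "real set"
  assumes [measurable]: "h \<in> borel_measurable borel" "A \<in> sets borel"
    and per: "\<And>x. h (x + c) = h x"
  shows "(\<integral>\<^sup>+x. h x * indicator A (x + c) \<partial>lborel) = (\<integral>\<^sup>+x. h x * indicator A x \<partial>lborel)"
proof -
  have "(\<integral>\<^sup>+x. h x * indicator A (x + c) \<partial>lborel) = (\<integral>\<^sup>+x. h (-c + 1 * x) * indicator A ((-c + 1 * x) + c) \<partial>lborel)"
    using nn_integral_real_affine[of "\<lambda>x. h x * indicator A (x + c)" 1 "-c"] by simp
  also have "\<dots> = (\<integral>\<^sup>+x. h x * indicator A x \<partial>lborel)"
    using per[of "-c + x" for x] by simp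
  finally show ?thesis .
qed

lemma full_int:
  fixes g :: real assumes g: "0 < g" "g < 1"
  shows "(\<integral>\<^sup>+t. ennreal (\<bar>sin t\<bar> powr (-g)) * indicator {0..pi} t \<partial>lborel) \<le> ennreal (pi/(1-g))"
proof -
  define h where "h = (\<lambda>t. ennreal (\<bar>sin t\<bar> powr (-g)))"
  have hm[measurable]: "h \<in> borel_measurable borel" unfolding h_def by measurable
  have "(\<integral>\<^sup>+t. h t * indicator {0..pi} t \<partial>lborel) \<le> (\<integral>\<^sup>+t. h t * indicator {0..pi/2} t + h t * indicator {pi/2..pi} t \<partial>lborel)"
    by (rule nn_integral_mono) (auto simp: indicator_def)
  also have "\<dots> = (\<integral>\<^sup>+t. h t * indicator {0..pi/2} t \<partial>lborel) + (\<integral>\<^sup>+t. h t * indicator {pi/2..pi} t \<partial>lborel)"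
    by (rule nn_integral_add) auto
  also have "(\<integral>\<^sup>+t. h t * indicator {pi/2..pi} t \<partial>lborel) = (\<integral>\<^sup>+t. h (pi + (-1) * t) * indicator {pi/2..pi} (pi + (-1) * t) \<partial>lborel)"
    using nn_integral_real_affine[of "\<lambda>t. h t * indicator {pi/2..pi} t" "-1" pi] by simp
  also have "\<dots> = (\<integral>\<^sup>+t. h t * indicator {0..pi/2} t \<partial>lborel)"
    by (intro nn_integral_cong) (auto simp: h_def indicator_def)
  also have "(\<integral>\<^sup>+t. h t * indicator {0..pi/2} t \<partial>lborel) \<le> ennreal (pi/2/(1-g))"
    using half_int[OF g] by (simp add: h_def)
  finally have "(\<integral>\<^sup>+t. h t * indicator {0..pi} t \<partial>lborel) \<le> ennreal (pi/2/(1-g)) + ennreal (pi/2/(1-g))"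
    by (simp add: add_mono)
  also have "\<dots> = ennreal (pi/2/(1-g) + pi/2/(1-g))" using g by (subst ennreal_plus[symmetric]) auto
  also have "pi/2/(1-g) + pi/2/(1-g) = pi/(1-g)" by (metis add_divide_distrib field_sum_of_halves)
  finally show ?thesis by (simp add: h_def)
qed

lemma circle_int:
  fixes g \<phi> :: real assumes g: "0 < g" "g < 1" and phi: "0 \<le> \<phi>" "\<phi> < pi"
  shows "(\<integral>\<^sup>+t. ennreal (\<bar>sin (t - \<phi>)\<bar> powr (-g)) * indicator {0..2*pi} t \<partial>lborel) \<le> ennreal (2*pi/(1-g))"
proof -
  define h where "h = (\<lambda>t. ennreal (\<bar>sin t\<bar> powr (-g)))"
  have hm[measurable]: "h \<in> borel_measurable borel" unfolding h_def by measurable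
  have per: "h (pi + x) = h x" for x by (simp add: h_def)
  have "(\<integral>\<^sup>+t. h t * indicator {-\<phi>..2*pi-\<phi>} t \<partial>lborel) = (\<integral>\<^sup>+t. h (-\<phi> + 1 * t) * indicator {-\<phi>..2*pi-\<phi>} (-\<phi> + 1 * t) \<partial>lborel)"
    using nn_integral_real_affine[of "\<lambda>t. h t * indicator {-\<phi>..2*pi-\<phi>} t" 1 "-\<phi>"] by simp
  also have "\<dots> = (\<integral>\<^sup>+t. ennreal (\<bar>sin (t - \<phi>)\<bar> powr (-g)) * indicator {0..2*pi} t \<partial>lborel)"
    by (intro nn_integral_cong) (auto simp: h_def indicator_def)
  finally have eq: "(\<integral>\<^sup>+t. ennreal (\<bar>sin (t - \<phi>)\<bar> powr (-g)) * indicator {0..2*pi} t \<partial>lborel) = (\<integral>\<^sup>+t. h t * indicator {-\<phi>..2*pi-\<phi>} t \<partial>lborel)" by simp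
  have "(\<integral>\<^sup>+t. h t * indicator {-\<phi>..2*pi-\<phi>} t \<partial>lborel) \<le>
      (\<integral>\<^sup>+t. h t * indicator {pi-\<phi>..<pi} (t + pi) + (h t * indicator {0<..pi-\<phi>} (t + -pi) + h t * indicator {0..pi} t) \<partial>lborel)"
    by (rule nn_integral_mono) (use phi in \<open>auto simp: indicator_def\<close>)
  also have "\<dots> = (\<integral>\<^sup>+t. h t * indicator {pi-\<phi>..<pi} (t + pi) \<partial>lborel) + ((\<integral>\<^sup>+t. h t * indicator {0<..pi-\<phi>} (t + -pi) \<partial>lborel) + (\<integral>\<^sup>+t. h t * indicator {0..pi} t \<partial>lborel))"
    by (subst nn_integral_add, simp, simp, subst nn_integral_add) auto
  also have "(\<integral>\<^sup>+t. h t * indicator {pi-\<phi>..<pi} (t + pi) \<partial>lborel) = (\<integral>\<^sup>+t. h t * indicator {pi-\<phi>..<pi} t \<partial>lborel)"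
    by (rule shift_pi) (auto simp: h_def)
  also have "(\<integral>\<^sup>+t. h t * indicator {0<..pi-\<phi>} (t + -pi) \<partial>lborel) = (\<integral>\<^sup>+t. h t * indicator {0<..pi-\<phi>} t \<partial>lborel)"
    by (rule shift_pi) (auto simp: h_def)
  also have "(\<integral>\<^sup>+t. h t * indicator {pi-\<phi>..<pi} t \<partial>lborel) + ((\<integral>\<^sup>+t. h t * indicator {0<..pi-\<phi>} t \<partial>lborel) + (\<integral>\<^sup>+t. h t * indicator {0..pi} t \<partial>lborel))
     = (\<integral>\<^sup>+t. h t * indicator {pi-\<phi>..<pi} t + h t * indicator {0<..pi-\<phi>} t \<partial>lborel) + (\<integral>\<^sup>+t. h t * indicator {0..pi} t \<partial>lborel)"
    by (subst nn_integral_add) (auto simp: add.assoc)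
  also have "(\<integral>\<^sup>+t. h t * indicator {pi-\<phi>..<pi} t + h t * indicator {0<..pi-\<phi>} t \<partial>lborel) \<le> (\<integral>\<^sup>+t. h t * indicator {0..pi} t \<partial>lborel)"
  proof (rule nn_integral_mono_AE)
    show "AE t in lborel. h t * indicator {pi-\<phi>..<pi} t + h t * indicator {0<..pi-\<phi>} t \<le> h t * indicator {0..pi} t"
      using AE_lborel_singleton[of "pi - \<phi>"]
    proof (rule AE_mp, intro AE_I2 impI)
      fix t :: real assume "t \<noteq> pi - \<phi>"
      then show "h t * indicator {pi-\<phi>..<pi} t + h t * indicator {0<..pi-\<phi>} t \<le> h t * indicator {0..pi} t"
        using phi by (cases "t < pi - \<phi>") (simp_all add: indicator_def)
    qed
  qed
  also have "(\<integral>\<^sup>+t. h t * indicator {0..pi} t \<partial>lborel) \<le> ennreal (pi/(1-g))"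
    using full_int[OF g] by (simp add: h_def)
  finally have "(\<integral>\<^sup>+t. h t * indicator {-\<phi>..2*pi-\<phi>} t \<partial>lborel) \<le> ennreal (pi/(1-g)) + ennreal (pi/(1-g))"
    by (simp add: add_mono)
  also have "\<dots> = ennreal (2*pi/(1-g))" using g by (subst ennreal_plus[symmetric]) (auto simp: add_divide_distrib[symmetric])
  finally show ?thesis using eq by simp
qed




lemma polar_half:
  fixes a :: complex
  obtains s \<phi> :: real where "0 \<le> \<phi>" "\<phi> < pi" "a = complex_of_real s * cis \<phi>"
proof -
  have b: "-pi < Arg a" "Arg a \<le> pi" using Arg_bounded by auto
  have a: "a = complex_of_real (cmod a) * cis (Arg a)"
    using rcis_cmod_Arg[of a] by (simp add: rcis_def)
  show ?thesis
  proof (cases "Arg a < 0")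
    case True
    have "cis (Arg a + pi) = - cis (Arg a)" by (simp add: cis_def complex_eq_iff)
    then have "a = complex_of_real (- cmod a) * cis (Arg a + pi)" using a by simp
    then show ?thesis using that[of "Arg a + pi" "- cmod a"] True b by auto
  next
    case False
    show ?thesis
    proof (cases "Arg a = pi")
      case True
      then have "a = complex_of_real (- cmod a) * cis 0" using a by (simp add: cis_def complex_eq_iff)
      then show ?thesis using that[of 0 "-cmod a"] pi_gt_zero by auto
    next
      case False
      then show ?thesis using that[of "Arg a" "cmod a"] a b \<open>\<not> Arg a < 0\<close> by auto
    qed
  qed
qed

lemma dist_sin:
  fixes r s \<theta> \<phi> :: real
  assumes that: "r \<ge> 0"
  shows "r * \<bar>sin (\<theta> - \<phi>)\<bar> \<le> cmod (complex_of_real r * cis \<theta> - complex_of_real s * cis \<phi>)"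
proof -
  have "cmod (complex_of_real r * cis \<theta> - complex_of_real s * cis \<phi>)
     = cmod (cis (-\<phi>) * (complex_of_real r * cis \<theta> - complex_of_real s * cis \<phi>))"
    by (simp add: norm_mult)
  also have "cis (-\<phi>) * (complex_of_real r * cis \<theta> - complex_of_real s * cis \<phi>) = complex_of_real r * cis (\<theta> - \<phi>) - complex_of_real s"
  proof -
    have 1: "cis (-\<phi>) * cis \<theta> = cis (\<theta> - \<phi>)" "cis (-\<phi>) * cis \<phi> = 1" by (simp_all add: cis_mult)
    have "cis (-\<phi>) * (complex_of_real r * cis \<theta> - complex_of_real s * cis \<phi>) = complex_of_real r * (cis (-\<phi>) * cis \<theta>) - complex_of_real s * (cis (-\<phi>) * cis \<phi>)"
      by (simp add: algebra_simps)
    then show ?thesis by (simp only: 1) simp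
  qed
  finally have e: "cmod (complex_of_real r * cis \<theta> - complex_of_real s * cis \<phi>) = cmod (complex_of_real r * cis (\<theta> - \<phi>) - complex_of_real s)" .
  have "\<bar>Im (complex_of_real r * cis (\<theta> - \<phi>) - complex_of_real s)\<bar> \<le> cmod (complex_of_real r * cis (\<theta> - \<phi>) - complex_of_real s)"
    by (rule abs_Im_le_cmod)
  then show ?thesis using that by (simp add: e abs_mult)
qed




lemma root_int:
  fixes a :: complex and g r :: real
  assumes g: "0 < g" "g < 1" and r: "r > 0"
  shows "(\<integral>\<^sup>+\<theta>. ennreal (1 / cmod (complex_of_real r * cis \<theta> - a) powr g) * indicator {0..2*pi} \<theta> \<partial>lborel)
     \<le> ennreal (2*pi/((1-g) * r powr g))"
proof -
  obtain s \<phi> where phi: "0 \<le> \<phi>" "\<phi> < pi" and a: "a = complex_of_real s * cis \<phi>"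
    by (rule polar_half)
  have cnt: "countable {\<theta>::real. sin (\<theta> - \<phi>) = 0}"
  proof -
    have "{\<theta>::real. sin (\<theta> - \<phi>) = 0} \<subseteq> (\<lambda>i::int. of_int i * pi + \<phi>) ` UNIV"
      by (auto simp: sin_zero_iff_int2 algebra_simps)
    then show ?thesis by (rule countable_subset) simp
  qed
  have "(\<integral>\<^sup>+\<theta>. ennreal (1 / cmod (complex_of_real r * cis \<theta> - a) powr g) * indicator {0..2*pi} \<theta> \<partial>lborel)
     \<le> (\<integral>\<^sup>+\<theta>. ennreal (r powr (-g)) * (ennreal (\<bar>sin (\<theta> - \<phi>)\<bar> powr (-g)) * indicator {0..2*pi} \<theta>) \<partial>lborel)"
  proof (rule nn_integral_mono_AE)
    have "AE \<theta> in lborel. \<theta> \<notin> {\<theta>::real. sin (\<theta> - \<phi>) = 0}"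
      by (rule AE_not_in) (rule countable_imp_null_set_lborel[OF cnt])
    then show "AE \<theta> in lborel. ennreal (1 / cmod (complex_of_real r * cis \<theta> - a) powr g) * indicator {0..2*pi} \<theta>
       \<le> ennreal (r powr (-g)) * (ennreal (\<bar>sin (\<theta> - \<phi>)\<bar> powr (-g)) * indicator {0..2*pi} \<theta>)"
    proof (rule AE_mp, intro AE_I2 impI)
      fix \<theta> :: real assume "\<theta> \<notin> {\<theta>::real. sin (\<theta> - \<phi>) = 0}"
      then have s0: "\<bar>sin (\<theta> - \<phi>)\<bar> > 0" by auto
      have d: "r * \<bar>sin (\<theta> - \<phi>)\<bar> \<le> cmod (complex_of_real r * cis \<theta> - a)"
        unfolding a by (rule dist_sin) (use r in auto)
      have pos: "0 < r * \<bar>sin (\<theta> - \<phi>)\<bar>" using r s0 by simp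
      have "1 / cmod (complex_of_real r * cis \<theta> - a) powr g \<le> 1 / (r * \<bar>sin (\<theta> - \<phi>)\<bar>) powr g"
        using d pos g by (intro divide_left_mono powr_mono2 mult_pos_pos) auto
      also have "\<dots> = r powr (-g) * \<bar>sin (\<theta> - \<phi>)\<bar> powr (-g)"
        using r s0 by (simp add: powr_mult powr_minus_divide)
      finally have "ennreal (1 / cmod (complex_of_real r * cis \<theta> - a) powr g) \<le> ennreal (r powr (-g)) * ennreal (\<bar>sin (\<theta> - \<phi>)\<bar> powr (-g))"
        by (simp add: ennreal_mult[symmetric])
      then show "ennreal (1 / cmod (complex_of_real r * cis \<theta> - a) powr g) * indicator {0..2*pi} \<theta>
       \<le> ennreal (r powr (-g)) * (ennreal (\<bar>sin (\<theta> - \<phi>)\<bar> powr (-g)) * indicator {0..2*pi} \<theta>)"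
        by (simp add: indicator_def)
    qed
  qed
  also have "\<dots> = ennreal (r powr (-g)) * (\<integral>\<^sup>+\<theta>. ennreal (\<bar>sin (\<theta> - \<phi>)\<bar> powr (-g)) * indicator {0..2*pi} \<theta> \<partial>lborel)"
    by (rule nn_integral_cmult) measurable
  also have "\<dots> \<le> ennreal (r powr (-g)) * ennreal (2*pi/(1-g))"
    by (intro mult_left_mono circle_int g phi) auto
  also have "\<dots> = ennreal (2*pi/((1-g) * r powr g))"
    using g r by (subst ennreal_mult[symmetric]) (auto simp: powr_minus_divide)
  finally show ?thesis .
qed




lemma pointwise:
  fixes p :: "complex poly" and g :: real and z :: complex and root :: "nat \<Rightarrow> complex"
  assumes n: "degree p > 0" and g: "0 < g"
    and fac: "smult (lead_coeff p) (\<Prod>i<degree p. [:-root i, 1:]) = p"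
  shows "1 / (cmod (poly p z) powr (g / real (degree p)))
     \<le> (\<Sum>i<degree p. (cmod (lead_coeff p) powr (-(g / real (degree p))) / real (degree p)) * (1 / cmod (z - root i) powr g))"
proof -
  define n where "n = degree p"
  define q where "q = g / real n"
  define c where "c = lead_coeff p"
  have pz: "poly p z = c * (\<Prod>i<n. z - root i)"
    using arg_cong[OF fac, of "\<lambda>p. poly p z"] by (simp add: poly_prod c_def n_def)
  have cz: "cmod (poly p z) = cmod c * (\<Prod>i<n. cmod (z - root i))"
    by (simp add: pz norm_mult prod_norm)
  have n0: "n > 0" using n by (simp add: n_def)
  have rhs0: "0 \<le> (\<Sum>i<n. (cmod c powr (-q) / real n) * (1 / cmod (z - root i) powr g))"
    by (intro sum_nonneg mult_nonneg_nonneg) auto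
  show ?thesis
  proof (cases "cmod (poly p z) = 0")
    case True
    then show ?thesis using rhs0 by (simp add: n_def q_def c_def)
  next
    case False
    then have c0: "cmod c > 0" and d0: "\<And>i. i < n \<Longrightarrow> cmod (z - root i) > 0"
      using cz by (auto simp: prod_zero_iff)
    define x where "x = (\<lambda>i. 1 / cmod (z - root i) powr g)"
    have am: "(\<Sum>i\<in>{..<n}. x i / card {..<n}) \<ge> (\<Prod>i\<in>{..<n}. x i) powr (1 / card {..<n})"
      by (rule arith_geom_mean) (use n0 in \<open>auto simp: x_def\<close>)
    have "(\<Prod>i\<in>{..<n}. x i) powr (1 / card {..<n}) = (\<Prod>i<n. x i powr (1/n))"
      by (simp add: prod_powr_distrib)
    also have "\<dots> = (\<Prod>i<n. 1 / cmod (z - root i) powr q)"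
    proof (rule prod.cong)
      fix i assume "i \<in> {..<n}"
      then show "x i powr (1/n) = 1 / cmod (z - root i) powr q"
        using d0[of i] by (simp add: x_def powr_divide powr_powr q_def)
    qed simp
    finally have am2: "(\<Prod>i<n. 1 / cmod (z - root i) powr q) \<le> (\<Sum>i<n. x i / n)" using am by simp
    have "1 / (cmod (poly p z) powr q) = cmod c powr (-q) * (\<Prod>i<n. 1 / cmod (z - root i) powr q)"
      using c0 d0 by (simp add: cz powr_mult prod_powr_distrib powr_minus_divide prod_dividef)
    also have "\<dots> \<le> cmod c powr (-q) * (\<Sum>i<n. x i / n)"
      by (rule mult_left_mono[OF am2]) simp
    also have "\<dots> = (\<Sum>i<n. (cmod c powr (-q) / real n) * x i)"
      by (simp add: sum_distrib_left)
    finally show ?thesis by (simp add: n_def q_def c_def x_def)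
  qed
qed




lemma cis_meas[measurable]: "cis \<in> borel_measurable borel"
  by (intro borel_measurable_continuous_onI continuous_intros)

theorem lemma5:
  fixes p :: "complex poly" and \<gamma> r :: real
  assumes "degree p > 0" and "0 < \<gamma>" and "\<gamma> < 1" and "r > 0"
  shows "(\<integral>\<^sup>+ \<theta>\<in>{0..2*pi}.
            ennreal (1 / (cmod (poly p (complex_of_real r * cis \<theta>)) powr (\<gamma> / real (degree p)))) \<partial>lborel)
         \<le> ennreal (2 * pi / ((1 - \<gamma>) * cmod (lead_coeff p) powr (\<gamma> / real (degree p))) * (1 / r powr \<gamma>))"
proof -
  obtain root where fac: "smult (lead_coeff p) (\<Prod>i<degree p. [:-root i, 1:]) = p"
    by (rule complex_poly_decompose')
  define n where "n = degree p"
  define K where "K = cmod (lead_coeff p) powr (-(\<gamma> / real n)) / real n"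
  define B where "B = 2*pi/((1-\<gamma>) * r powr \<gamma>)"
  have n0: "n > 0" using assms by (simp add: n_def)
  have K0: "K \<ge> 0" by (simp add: K_def)
  have B0: "B \<ge> 0" using assms by (simp add: B_def)
  have c0: "lead_coeff p \<noteq> 0" using assms by auto
  have "(\<integral>\<^sup>+ \<theta>\<in>{0..2*pi}. ennreal (1 / (cmod (poly p (complex_of_real r * cis \<theta>)) powr (\<gamma> / real (degree p)))) \<partial>lborel)
     \<le> (\<integral>\<^sup>+ \<theta>. (\<Sum>i<n. ennreal K * (ennreal (1 / cmod (complex_of_real r * cis \<theta> - root i) powr \<gamma>) * indicator {0..2*pi} \<theta>)) \<partial>lborel)"
  proof (rule nn_integral_mono)
    fix \<theta> :: real
    have "1 / (cmod (poly p (complex_of_real r * cis \<theta>)) powr (\<gamma> / real (degree p)))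
      \<le> (\<Sum>i<n. K * (1 / cmod (complex_of_real r * cis \<theta> - root i) powr \<gamma>))"
      using pointwise[OF assms(1) assms(2) fac, of "complex_of_real r * cis \<theta>"] by (simp add: K_def n_def)
    then have "ennreal (1 / (cmod (poly p (complex_of_real r * cis \<theta>)) powr (\<gamma> / real (degree p))))
      \<le> (\<Sum>i<n. ennreal K * ennreal (1 / cmod (complex_of_real r * cis \<theta> - root i) powr \<gamma>))"
      using K0 by (simp add: ennreal_mult[symmetric] sum_ennreal ennreal_leI)
    then show "ennreal (1 / (cmod (poly p (complex_of_real r * cis \<theta>)) powr (\<gamma> / real (degree p)))) * indicator {0..2*pi} \<theta>
      \<le> (\<Sum>i<n. ennreal K * (ennreal (1 / cmod (complex_of_real r * cis \<theta> - root i) powr \<gamma>) * indicator {0..2*pi} \<theta>))"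
      by (simp add: indicator_def)
  qed
  also have "\<dots> = (\<Sum>i<n. ennreal K * (\<integral>\<^sup>+ \<theta>. ennreal (1 / cmod (complex_of_real r * cis \<theta> - root i) powr \<gamma>) * indicator {0..2*pi} \<theta> \<partial>lborel))"
    by (subst nn_integral_sum) (auto intro!: sum.cong nn_integral_cmult)
  also have "\<dots> \<le> (\<Sum>i<n. ennreal K * ennreal B)"
    by (intro sum_mono mult_left_mono) (use root_int assms(2-4) in \<open>auto simp: B_def\<close>)
  also have "\<dots> = ennreal (real n * K * B)"
    using K0 B0 by (simp add: ennreal_mult[symmetric] ennreal_of_nat_eq_real_of_nat mult.assoc)
  also have "real n * K * B = 2 * pi / ((1 - \<gamma>) * cmod (lead_coeff p) powr (\<gamma> / real (degree p))) * (1 / r powr \<gamma>)"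
    using n0 c0 by (simp add: K_def B_def n_def powr_minus_divide field_simps)
  finally show ?thesis .
qed


end
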